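(* Let $X$ be a finite connected $s$-regular graph with vertex set $X^0$, edge set $X^1$, and let $\lambda_2$ be the second largest eigenvalue of its adjacency matrix. Let $0<\alpha\le 1$ and let $E\subset X^1$ with $|E|\le\alpha|X^1|$. Let $\Gamma(E)\subset X^0$ be the set of vertices incident to some edge of $E$. Then $|\Gamma(E)|\ge\beta|E|$, where $$\beta=\frac{\sqrt{\lambda_2^2+4s(s-\lambda_2)\alpha}-\lambda_2}{s(s-\lambda_2)\alpha}.$$ *)

theory Defs
  imports "Jordan_Normal_Form.Char_Poly" "HOL-Library.Multiset"
begin

definition simple_graph :: "nat \<Rightarrow> (nat \<Rightarrow> nat \<Rightarrow> bool) \<Rightarrow> bool" where
  "simple_graph n adj \<longleftrightarrow>
     (\<forall>u v. adj u v \<longrightarrow> u < n \<and> v < n) \<and>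
     (\<forall>u v. adj u v \<longrightarrow> adj v u) \<and> (\<forall>u. \<not> adj u u)"

definition graph_edges :: "nat \<Rightarrow> (nat \<Rightarrow> nat \<Rightarrow> bool) \<Rightarrow> nat set set" where
  "graph_edges n adj = {{u, v} | u v. u < n \<and> v < n \<and> adj u v}"

definition regular_graph :: "nat \<Rightarrow> (nat \<Rightarrow> nat \<Rightarrow> bool) \<Rightarrow> nat \<Rightarrow> bool" where
  "regular_graph n adj s \<longleftrightarrow> (\<forall>u < n. card {v. v < n \<and> adj u v} = s)"

definition connected_graph :: "nat \<Rightarrow> (nat \<Rightarrow> nat \<Rightarrow> bool) \<Rightarrow> bool" where
  "connected_graph n adj \<longleftrightarrow> (\<forall>u < n. \<forall>v < n. adj\<^sup>*\<^sup>* u v)"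

definition adjacency_matrix :: "nat \<Rightarrow> (nat \<Rightarrow> nat \<Rightarrow> bool) \<Rightarrow> real mat" where
  "adjacency_matrix n adj = mat n n (\<lambda>(i, j). if adj i j then 1 else 0)"

definition eigenvalues_desc :: "real mat \<Rightarrow> real list" where
  "eigenvalues_desc A = rev (sorted_list_of_multiset (proots (char_poly A)))"

definition second_largest_eigenvalue :: "real mat \<Rightarrow> real" where
  "second_largest_eigenvalue A = eigenvalues_desc A ! 1"

definition incident_vertices :: "nat set set \<Rightarrow> nat set" where
  "incident_vertices E = \<Union> E"

end

theory Submission
  imports Defs
begin

definition hh :: "nat \<Rightarrow> real vec \<Rightarrow> real mat" where
  "hh m v = (let w = (\<lambda>i. v $ i - (if i = 0 then 1 else 0)); c = 2 / (\<Sum>k<m. (w k)\<^sup>2)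
     in mat m m (\<lambda>(i,j). (if i = j then 1 else 0) - c * w i * w j))"

lemma hh_carrier: "hh m v \<in> carrier_mat m m" unfolding hh_def Let_def by auto

lemma hh_sym: "(hh m v)\<^sup>T = hh m v"
  unfolding hh_def Let_def by (rule eq_matI) auto

lemma set_single_lt[simp]: "j < (m::nat) \<Longrightarrow> {x. x = j \<and> x < m} = {j}" by auto

lemma hh_mult: "hh m v * hh m v = 1\<^sub>m m"
proof -
  define w where "w = (\<lambda>i. v $ i - (if i = 0 then 1 else 0 :: real))"
  define S where "S = (\<Sum>k<m. (w k)\<^sup>2)"
  define c where "c = 2 / S"
  have H: "hh m v = mat m m (\<lambda>(i,j). (if i = j then 1 else 0) - c * w i * w j)"
    unfolding hh_def Let_def w_def[symmetric] S_def[symmetric] c_def[symmetric] ..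
  have key: "- 2 * c + c * c * S = 0" unfolding c_def by (cases "S = 0") (auto simp: field_simps)
  show ?thesis
  proof (rule eq_matI)
    fix i j assume i: "i < dim_row (1\<^sub>m m)" and j: "j < dim_col (1\<^sub>m m)"
    hence i: "i < m" and j: "j < m" by auto
    have "(hh m v * hh m v) $$ (i,j) = (\<Sum>k<m. ((if i = k then 1 else 0) - c * w i * w k) * ((if k = j then 1 else 0) - c * w k * w j))"
      using i j unfolding H by (simp add: scalar_prod_def atLeast0LessThan)
    also have "\<dots> = (\<Sum>k<m. (if i = k then 1 else 0) * (if k = j then 1 else 0))
        - (\<Sum>k<m. (if i = k then 1 else 0) * (c * w k * w j))
        - (\<Sum>k<m. (if k = j then 1 else 0) * (c * w i * w k))
        + c * c * w i * w j * S"
      unfolding S_def by (simp add: algebra_simps sum.distrib sum_subtractf sum_distrib_left power2_eq_square)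
    also have "\<dots> = (if i = j then 1 else 0) - 2 * c * w i * w j + c * c * w i * w j * S"
      using i j by (simp add: if_distrib[of "\<lambda>x. x * _"] sum.If_cases Int_def)
    also have "\<dots> = (if i = j then 1 else 0) + w i * w j * (- 2 * c + c * c * S)"
      by (simp add: algebra_simps)
    also have "\<dots> = 1\<^sub>m m $$ (i,j)" using i j key by simp
    finally show "(hh m v * hh m v) $$ (i,j) = 1\<^sub>m m $$ (i,j)" .
  qed (auto simp: hh_def)
qed

lemma hh_col0:
  assumes v: "v \<in> carrier_vec m" and unit: "v \<bullet> v = 1" and m: "m > 0"
  shows "col (hh m v) 0 = v"
proof -
  define w where "w = (\<lambda>i. v $ i - (if i = 0 then 1 else 0 :: real))"
  define S where "S = (\<Sum>k<m. (w k)\<^sup>2)"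
  define c where "c = 2 / S"
  have H: "hh m v = mat m m (\<lambda>(i,j). (if i = j then 1 else 0) - c * w i * w j)"
    unfolding hh_def Let_def w_def[symmetric] S_def[symmetric] c_def[symmetric] ..
  have vv: "(\<Sum>k<m. (v $ k)\<^sup>2) = 1" using unit v by (simp add: scalar_prod_def atLeast0LessThan power2_eq_square)
  have "S = (\<Sum>k<m. (v $ k)\<^sup>2) - 2 * v $ 0 + 1"
  proof -
    have "S = (\<Sum>k<m. (v $ k)\<^sup>2 - 2 * (if k = 0 then v $ k else 0) + (if k = 0 then 1 else 0))"
      unfolding S_def w_def by (intro sum.cong refl) (auto simp: power2_eq_square algebra_simps)
    also have "\<dots> = (\<Sum>k<m. (v $ k)\<^sup>2) - 2 * v $ 0 + 1" using m
      by (simp add: sum.distrib sum_subtractf sum_distrib_left[symmetric])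
    finally show ?thesis .
  qed
  hence S: "S = 2 - 2 * v $ 0" using vv by simp
  show ?thesis
  proof (rule eq_vecI)
    fix i assume "i < dim_vec v" hence i: "i < m" using v by auto
    show "col (hh m v) 0 $ i = v $ i"
    proof (cases "S = 0")
      case True
      hence "w i = 0" using i unfolding S_def by (subst (asm) sum_nonneg_eq_0_iff) auto
      moreover have "c = 0" using True unfolding c_def by simp
      ultimately show ?thesis using i m unfolding H w_def by (auto split: if_splits)
    next
      case False
      have "c * w 0 = -1" unfolding c_def w_def using False S by (simp add: field_simps)
      hence "c * w i * w 0 = - w i" by (metis mult.commute mult.left_commute mult_minus1_right)
      thus ?thesis using i m unfolding H w_def by auto
    qed
  qed (insert v, auto simp: hh_def)
qed

lemma sym_real_root:
  fixes A :: "real mat"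
  assumes A: "A \<in> carrier_mat n n" and sym: "\<And>i j. i < n \<Longrightarrow> j < n \<Longrightarrow> A $$ (i,j) = A $$ (j,i)"
    and n: "n > 0"
  shows "\<exists>e. poly (char_poly A) e = 0"
proof -
  let ?B = "map_mat complex_of_real A"
  have B: "?B \<in> carrier_mat n n" using A by auto
  have cpB: "char_poly ?B = map_poly of_real (char_poly A)"
    using of_real_hom.char_poly_hom[OF A] by simp
  obtain as where as: "char_poly ?B = (\<Prod>a\<leftarrow>as. [:- a, 1:])" "length as = n"
    using char_poly_factorized[OF B] by blast
  then obtain z where z: "z \<in> set as" using n by (cases as) auto
  have "poly (char_poly ?B) z = 0" unfolding as(1) using z
    by (simp add: poly_prod_list prod_list_zero_iff)
  hence "eigenvalue ?B z" using eigenvalue_root_char_poly[OF B] by simp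
  then obtain v where v: "eigenvector ?B v z" unfolding eigenvalue_def by blast
  hence vc: "v \<in> carrier_vec n" and v0: "v \<noteq> 0\<^sub>v n" and ev: "?B *\<^sub>v v = z \<cdot>\<^sub>v v"
    unfolding eigenvector_def using B by auto
  have dv: "dim_vec v = n" using vc by auto
  define q where "q = (\<Sum>i<n. \<Sum>j<n. cnj (v $ i) * of_real (A $$ (i,j)) * v $ j)"
  define N where "N = (\<Sum>i<n. cnj (v $ i) * v $ i)"
  have rowi: "(?B *\<^sub>v v) $ i = (\<Sum>j<n. of_real (A $$ (i,j)) * v $ j)" if "i < n" for i
    using that A dv by (auto simp: scalar_prod_def atLeast0LessThan)
  have "q = (\<Sum>i<n. cnj (v $ i) * (?B *\<^sub>v v) $ i)"
    unfolding q_def by (simp add: rowi sum_distrib_left mult.assoc)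
  also have "\<dots> = (\<Sum>i<n. cnj (v $ i) * (z * v $ i))"
    using ev dv by (intro sum.cong) auto
  also have "\<dots> = z * N" unfolding N_def by (simp add: sum_distrib_left algebra_simps)
  finally have qzN: "q = z * N" .
  have "cnj q = (\<Sum>i<n. \<Sum>j<n. v $ i * of_real (A $$ (i,j)) * cnj (v $ j))"
    unfolding q_def by simp
  also have "\<dots> = (\<Sum>j<n. \<Sum>i<n. v $ i * of_real (A $$ (i,j)) * cnj (v $ j))"
    by (rule sum.swap)
  also have "\<dots> = q" unfolding q_def
    by (intro sum.cong refl) (simp add: sym mult.commute mult.left_commute)
  finally have cq: "cnj q = q" .
  have Nreal: "cnj N = N" unfolding N_def by (simp add: mult.commute)
  have N0: "N \<noteq> 0"
  proof
    assume N0: "N = 0"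
    obtain i where i: "i < n" "v $ i \<noteq> 0" using v0 vc by (metis carrier_vecD eq_vecI index_zero_vec(1,2))
    have "N = of_real (\<Sum>i<n. (cmod (v $ i))\<^sup>2)" unfolding N_def of_real_sum
      by (intro sum.cong refl) (metis complex_norm_square mult.commute of_real_power)
    hence "(\<Sum>i<n. (cmod (v $ i))\<^sup>2) = 0" using N0 by (metis of_real_eq_0_iff)
    hence "(cmod (v $ i))\<^sup>2 = 0" using i by (subst (asm) sum_nonneg_eq_0_iff) auto
    thus False using i by simp
  qed
  have "cnj z * N = z * N" using cq qzN Nreal by (metis complex_cnj_mult)
  hence cz: "cnj z = z" using N0 by simp
  hence zr: "z = of_real (Re z)" by (metis Reals_cnj_iff complex_is_Real_iff of_real_Re)
  have "of_real (poly (char_poly A) (Re z)) = poly (char_poly ?B) (of_real (Re z) :: complex)"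
    by (simp add: cpB of_real_hom.poly_map_poly)
  also have "\<dots> = 0" using \<open>poly (char_poly ?B) z = 0\<close> zr by simp
  finally show ?thesis by auto
qed

definition diagm :: "nat \<Rightarrow> real list \<Rightarrow> real mat" where
  "diagm n es = mat n n (\<lambda>(i,j). if i = j then es ! i else 0)"

lemma diagm_carrier[simp]: "diagm n es \<in> carrier_mat n n" unfolding diagm_def by auto

lemma spectral:
  fixes A :: "real mat"
  assumes "A \<in> carrier_mat n n" and "A\<^sup>T = A"
  shows "\<exists>U es. U \<in> carrier_mat n n \<and> U\<^sup>T * U = 1\<^sub>m n \<and> length es = n \<and> U\<^sup>T * A * U = diagm n es"
  using assms
proof (induction n arbitrary: A)
  case 0
  show ?case
    by (rule exI[of _ "1\<^sub>m 0"], rule exI[of _ "[]"], insert 0(1), auto intro!: eq_matI simp: diagm_def)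
next
  case (Suc n)
  note A = Suc.prems(1)
  have symA: "A $$ (i,j) = A $$ (j,i)" if "i < Suc n" "j < Suc n" for i j
    using arg_cong[OF Suc.prems(2), of "\<lambda>M. M $$ (j,i)"] that A by auto
  obtain e where "poly (char_poly A) e = 0" using sym_real_root[OF A symA] by auto
  hence "eigenvalue A e" using eigenvalue_root_char_poly[OF A] by simp
  then obtain v0 where "eigenvector A v0 e" unfolding eigenvalue_def by blast
  hence v0: "v0 \<in> carrier_vec (Suc n)" "v0 \<noteq> 0\<^sub>v (Suc n)" "A *\<^sub>v v0 = e \<cdot>\<^sub>v v0"
    unfolding eigenvector_def using A by auto
  have pos: "v0 \<bullet> v0 > 0"
  proof -
    obtain i where i: "i < Suc n" "v0 $ i \<noteq> 0" using v0(1,2) by (metis carrier_vecD eq_vecI index_zero_vec(1,2))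
    have "v0 \<bullet> v0 = (\<Sum>k<Suc n. (v0 $ k)\<^sup>2)" using v0(1)
      by (simp add: scalar_prod_def atLeast0LessThan power2_eq_square)
    also have "\<dots> \<ge> (v0 $ i)\<^sup>2" using i by (intro member_le_sum) auto
    finally show ?thesis using i by (smt (verit) zero_less_power2)
  qed
  define v where "v = (1 / sqrt (v0 \<bullet> v0)) \<cdot>\<^sub>v v0"
  have vc: "v \<in> carrier_vec (Suc n)" unfolding v_def using v0 by auto
  have vv: "v \<bullet> v = 1" unfolding v_def using v0(1) pos
    by (simp add: smult_scalar_prod_distrib scalar_prod_smult_distrib power2_eq_square[symmetric])
  have Av: "A *\<^sub>v v = e \<cdot>\<^sub>v v" unfolding v_def using v0 A
    by (simp add: mult_mat_vec smult_smult_assoc mult.commute)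
  define H where "H = hh (Suc n) v"
  have H: "H \<in> carrier_mat (Suc n) (Suc n)" unfolding H_def by (rule hh_carrier)
  have HT: "H\<^sup>T = H" unfolding H_def by (rule hh_sym)
  have HH: "H * H = 1\<^sub>m (Suc n)" unfolding H_def by (rule hh_mult)
  have Hc0: "col H 0 = v" unfolding H_def by (rule hh_col0[OF vc vv], simp)
  define A' where "A' = H * A * H"
  have A': "A' \<in> carrier_mat (Suc n) (Suc n)" unfolding A'_def using H A by auto
  have A'T: "A'\<^sup>T = A'"
  proof -
    have "A'\<^sup>T = H\<^sup>T * (H * A)\<^sup>T" unfolding A'_def using H A by (intro transpose_mult) auto
    also have "(H * A)\<^sup>T = A\<^sup>T * H\<^sup>T" using H A by (intro transpose_mult) auto
    finally show ?thesis unfolding A'_def using HT Suc.prems(2) H A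
      by (simp add: assoc_mult_mat[of _ "Suc n" "Suc n"])
  qed
  have Hv: "H *\<^sub>v v = unit_vec (Suc n) 0"
  proof -
    have "col (H * H) 0 = H *\<^sub>v col H 0" by (rule col_mult2[OF H H]) simp
    hence "H *\<^sub>v v = col (H * H) 0" using Hc0 by simp
    thus ?thesis using HH by simp
  qed
  have colA': "col A' 0 = e \<cdot>\<^sub>v unit_vec (Suc n) 0"
  proof -
    have "col A' 0 = (H * A) *\<^sub>v col H 0" unfolding A'_def using H A by (intro col_mult2) auto
    also have "\<dots> = H *\<^sub>v (A *\<^sub>v v)" using H A vc Hc0 by simp
    also have "\<dots> = e \<cdot>\<^sub>v (H *\<^sub>v v)" using Av H vc by (simp add: mult_mat_vec)
    finally show ?thesis using Hv by simp
  qed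
  have A'i0: "A' $$ (i,0) = (if i = 0 then e else 0)" if "i < Suc n" for i
    using arg_cong[OF colA', of "\<lambda>x. x $ i"] that A' by auto
  have A'0j: "A' $$ (0,j) = (if j = 0 then e else 0)" if "j < Suc n" for j
    using arg_cong[OF A'T, of "\<lambda>M. M $$ (j,0)"] A'i0[OF that] that A' by auto
  define A3 where "A3 = mat n n (\<lambda>(i,j). A' $$ (Suc i, Suc j))"
  have A3: "A3 \<in> carrier_mat n n" unfolding A3_def by auto
  have symA': "A' $$ (i,j) = A' $$ (j,i)" if "i < Suc n" "j < Suc n" for i j
    using arg_cong[OF A'T, of "\<lambda>M. M $$ (j,i)"] that A' by auto
  have A3T: "A3\<^sup>T = A3" unfolding A3_def
    using symA' by (intro eq_matI) auto
  obtain U3 es3 where U3: "U3 \<in> carrier_mat n n" "U3\<^sup>T * U3 = 1\<^sub>m n" "length es3 = n"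
      "U3\<^sup>T * A3 * U3 = diagm n es3"
    using Suc.IH[OF A3 A3T] by blast
  define E where "E = mat 1 1 (\<lambda>_. e)"
  have A'blk: "A' = four_block_mat E (0\<^sub>m 1 n) (0\<^sub>m n 1) A3"
    unfolding E_def A3_def using A' A'i0 A'0j
    by (intro eq_matI) (auto simp: less_Suc_eq_0_disj)
  define B where "B = four_block_mat (1\<^sub>m 1) (0\<^sub>m 1 n) (0\<^sub>m n 1) U3"
  have B: "B \<in> carrier_mat (Suc n) (Suc n)" unfolding B_def using U3 by auto
  have BT: "B\<^sup>T = four_block_mat (1\<^sub>m 1) (0\<^sub>m 1 n) (0\<^sub>m n 1) U3\<^sup>T"
    unfolding B_def using U3 by (subst transpose_four_block_mat) auto
  have BTB: "B\<^sup>T * B = 1\<^sub>m (Suc n)"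
    unfolding BT unfolding B_def using U3
    by (subst mult_four_block_mat[of _ 1 1 _ n _ n]) auto
  define U where "U = H * B"
  have U: "U \<in> carrier_mat (Suc n) (Suc n)" unfolding U_def using H B by auto
  have UT: "U\<^sup>T = B\<^sup>T * H" unfolding U_def using H B HT by (simp add: transpose_mult)
  have UTU: "U\<^sup>T * U = 1\<^sub>m (Suc n)"
  proof -
    have "U\<^sup>T * U = B\<^sup>T * H * (H * B)" unfolding UT by (simp add: U_def)
    also have "\<dots> = B\<^sup>T * (H * H) * B" using H B
      by (simp add: assoc_mult_mat[of _ "Suc n" "Suc n" _ "Suc n" _ "Suc n"])
    finally have "U\<^sup>T * U = B\<^sup>T * (H * H) * B" .
    thus ?thesis using HH BTB B by simp
  qed
  have "U\<^sup>T * A * U = B\<^sup>T * H * A * (H * B)" unfolding UT by (simp add: U_def)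
  also have "\<dots> = B\<^sup>T * A' * B" unfolding A'_def using H B A
    by (simp add: assoc_mult_mat[of _ "Suc n" "Suc n" _ "Suc n" _ "Suc n"])
  also have "\<dots> = four_block_mat E (0\<^sub>m 1 n) (0\<^sub>m n 1) (U3\<^sup>T * A3 * U3)"
    unfolding BT A'blk unfolding B_def using U3 A3
    apply (subst mult_four_block_mat[of _ 1 1 _ n _ n])
    apply (auto simp: E_def)[8]
    apply (subst mult_four_block_mat[of _ 1 1 _ n _ n])
    apply (auto simp: E_def)[8]
    apply (rule cong_four_block_mat)
    apply (auto simp: E_def diagm_def intro!: eq_matI)
    done
  also have "\<dots> = diagm (Suc n) (e # es3)" unfolding U3(4) E_def diagm_def
    by (intro eq_matI) (auto simp: less_Suc_eq_0_disj split: if_splits)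
  finally show ?case using U UTU U3(3) by (intro exI[of _ U] exI[of _ "e # es3"]) auto
qed

lemma second_facts:
  fixes es :: "real list"
  assumes n: "length es \<ge> 2"
  defines "m2 \<equiv> rev (sort es) ! 1"
  shows "m2 \<in> set es" "card {i. i < length es \<and> es ! i > m2} \<le> 1"
proof -
  let ?L = "rev (sort es)"
  have lenL: "length ?L = length es" by simp
  show "m2 \<in> set es" unfolding m2_def using n
    by (metis Suc_1 Suc_le_lessD length_rev length_sort lessI less_le_trans nth_mem set_rev set_sort)
  have sw: "sorted_wrt (\<ge>) ?L" by (simp add: sorted_wrt_rev)
  have "card {i. i < length es \<and> es ! i > m2} = length (filter (\<lambda>x. x > m2) es)"
    by (simp add: length_filter_conv_card)
  also have "\<dots> = length (filter (\<lambda>x. x > m2) ?L)"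
    by (metis mset_filter mset_rev mset_sort size_mset)
  also have "\<dots> = card {j. j < length ?L \<and> ?L ! j > m2}" by (simp add: length_filter_conv_card)
  also have "\<dots> \<le> card {0::nat}"
  proof (rule card_mono)
    show "{j. j < length ?L \<and> ?L ! j > m2} \<subseteq> {0}"
    proof
      fix j assume j: "j \<in> {j. j < length ?L \<and> ?L ! j > m2}"
      show "j \<in> {0}"
      proof (rule ccontr)
        assume "j \<notin> {0}"
        hence "1 \<le> j" by auto
        have "?L ! j \<le> ?L ! 1"
        proof (cases "j = 1")
          case False
          thus ?thesis using sorted_wrt_nth_less[OF sw, of 1 j] j \<open>1 \<le> j\<close> by auto
        qed simp
        thus False using j unfolding m2_def by simp
      qed
    qed
  qed simp
  finally show "card {i. i < length es \<and> es ! i > m2} \<le> 1" by simp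
qed

lemma quad_ineq:
  fixes es :: "real list" and y z :: "nat \<Rightarrow> real"
  assumes n: "length es \<ge> 2"
    and ez: "\<And>i. i < length es \<Longrightarrow> es ! i * z i = s * z i"
    and es_le: "\<And>i. i < length es \<Longrightarrow> es ! i \<le> s"
    and yz: "(\<Sum>i<length es. y i * z i) = 0"
    and z0: "\<exists>i < length es. z i \<noteq> 0"
  shows "(\<Sum>i<length es. es ! i * (y i)\<^sup>2) \<le> rev (sort es) ! 1 * (\<Sum>i<length es. (y i)\<^sup>2)"
proof -
  define m2 where "m2 = rev (sort es) ! 1"
  define K where "K = {i. i < length es \<and> es ! i > m2}"
  have cK: "card K \<le> 1" unfolding K_def m2_def using second_facts[OF n] by simp
  have fK: "finite K" unfolding K_def by auto
  have tm: "(es ! i - m2) * (y i)\<^sup>2 \<le> 0" if i: "i < length es" for i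
  proof (cases "i \<in> K")
    case False
    hence "es ! i \<le> m2" using i unfolding K_def by auto
    thus ?thesis by (simp add: mult_nonpos_nonneg)
  next
    case True
    have "\<forall>a\<in>K. \<forall>b\<in>K. a = b" using cK card_le_Suc0_iff_eq[OF fK] by simp
    hence Ki: "K = {i}" using True by blast
    have others: "es ! j \<le> m2" if "j < length es" "j \<noteq> i" for j
    proof -
      have "j \<notin> K" using Ki that(2) by blast
      thus ?thesis using that(1) unfolding K_def by auto
    qed
    have eigi: "es ! i > m2" using True unfolding K_def by auto
    obtain j where j: "j < length es" "z j \<noteq> 0" using z0 by auto
    have "es ! j = s" using ez[OF j(1)] j(2) by (metis mult_right_cancel)
    have "es ! i = s"
    proof (cases "j = i")
      case True thus ?thesis using \<open>es ! j = s\<close> by simp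
    next
      case False
      hence "es ! j \<le> m2" using others j by simp
      thus ?thesis using es_le[OF i] eigi \<open>es ! j = s\<close> by linarith
    qed
    have zo: "z k = 0" if "k < length es" "k \<noteq> i" for k
    proof -
      have "es ! k < s" using others[OF that] eigi \<open>es ! i = s\<close> by linarith
      moreover have "(es ! k - s) * z k = 0" using ez[OF that(1)] by (simp add: algebra_simps)
      ultimately show ?thesis by simp
    qed
    have zi: "z i \<noteq> 0" using j zo by metis
    have "(\<Sum>k<length es. y k * z k) = y i * z i"
      using zo i by (subst sum.remove[of _ i]) auto
    hence "y i = 0" using yz zi by simp
    thus ?thesis by simp
  qed
  have "(\<Sum>i<length es. (es ! i - m2) * (y i)\<^sup>2) \<le> 0" using tm by (intro sum_nonpos) auto
  moreover have "(\<Sum>i<length es. (es ! i - m2) * (y i)\<^sup>2) =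
     (\<Sum>i<length es. es ! i * (y i)\<^sup>2) - m2 * (\<Sum>i<length es. (y i)\<^sup>2)"
    by (simp add: left_diff_distrib sum_subtractf sum_distrib_left)
  ultimately show ?thesis unfolding m2_def by linarith
qed

lemma diagm_mult_vec: "y \<in> carrier_vec n \<Longrightarrow> length es = n \<Longrightarrow> k < n \<Longrightarrow> (diagm n es *\<^sub>v y) $ k = es ! k * y $ k"
proof -
  assume y: "y \<in> carrier_vec n" and l: "length es = n" and k: "k < n"
  have "(diagm n es *\<^sub>v y) $ k = (\<Sum>j\<in>{0..<n}. (if k = j then es ! k else 0) * y $ j)"
    using y k by (simp add: diagm_def scalar_prod_def)
  also have "\<dots> = es ! k * y $ k" using k by (simp add: if_distrib[of "\<lambda>x. x * _"] sum.If_cases Int_def)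
  finally show ?thesis .
qed

lemma spectral_bound:
  fixes A :: "real mat" and s :: real
  assumes A: "A \<in> carrier_mat n n" and AT: "A\<^sup>T = A" and n: "n \<ge> 2"
    and A1: "A *\<^sub>v vec n (\<lambda>_. 1) = s \<cdot>\<^sub>v vec n (\<lambda>_. 1)"
    and QB: "\<And>x. x \<in> carrier_vec n \<Longrightarrow> x \<bullet> (A *\<^sub>v x) \<le> s * (x \<bullet> x)"
  shows "second_largest_eigenvalue A \<le> s"
    "\<And>x. x \<in> carrier_vec n \<Longrightarrow> x \<bullet> vec n (\<lambda>_. 1) = 0 \<Longrightarrow>
        x \<bullet> (A *\<^sub>v x) \<le> second_largest_eigenvalue A * (x \<bullet> x)"
proof -
  obtain U es where U: "U \<in> carrier_mat n n" and UTU: "U\<^sup>T * U = 1\<^sub>m n" and les: "length es = n"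
    and UAU: "U\<^sup>T * A * U = diagm n es"
    using spectral[OF A AT] by blast
  define D where "D = diagm n es"
  have D: "D \<in> carrier_mat n n" unfolding D_def by simp
  have UT: "U\<^sup>T \<in> carrier_mat n n" using U by simp
  have UUT: "U * U\<^sup>T = 1\<^sub>m n" using mat_mult_left_right_inverse[OF UT U UTU] .
  have AUDU: "A = U * D * U\<^sup>T"
  proof -
    have "U * D * U\<^sup>T = (U * U\<^sup>T) * A * (U * U\<^sup>T)" unfolding D_def UAU[symmetric] using U A
      by (simp add: assoc_mult_mat[of _ n n _ n _ n])
    thus ?thesis using UUT A by simp
  qed
  have "similar_mat A D" unfolding similar_mat_def similar_mat_wit_def
    by (rule exI[of _ U], rule exI[of _ "U\<^sup>T"], insert A D U UUT UTU AUDU, auto simp: Let_def)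
  hence "char_poly A = char_poly D" by (rule char_poly_similar)
  also have "\<dots> = (\<Prod>a\<leftarrow>diag_mat D. [:- a, 1:])"
    by (rule char_poly_upper_triangular[OF D]) (auto simp: D_def diagm_def upper_triangular_def)
  also have "diag_mat D = es" unfolding D_def diagm_def diag_mat_def using les
    by (auto intro: nth_equalityI)
  finally have cp: "char_poly A = (\<Prod>a\<leftarrow>es. [:- a, 1:])" .
  have "proots (char_poly A) = mset es" unfolding cp
  proof (induction es)
    case (Cons a es)
    have nz: "(\<Prod>a\<leftarrow>es. [:- a, 1:]) \<noteq> (0 :: real poly)"
      by (auto simp: prod_list_zero_iff)
    have "(\<Prod>a\<leftarrow>a # es. [:- a, 1:]) = [:- a, 1:] * (\<Prod>a\<leftarrow>es. [:- a, 1:])" by simp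
    also have "proots \<dots> = proots [:- a, 1:] + proots (\<Prod>a\<leftarrow>es. [:- a, 1:])"
      by (rule proots_mult) (use nz in auto)
    finally show ?case using Cons by (simp del: proots_mult)
  qed simp
  hence sle: "second_largest_eigenvalue A = rev (sort es) ! 1"
    unfolding second_largest_eigenvalue_def eigenvalues_desc_def by simp
  have coords: "x \<bullet> (A *\<^sub>v x) = (\<Sum>k<n. es ! k * ((U\<^sup>T *\<^sub>v x) $ k)\<^sup>2) \<and> x \<bullet> x = (\<Sum>k<n. ((U\<^sup>T *\<^sub>v x) $ k)\<^sup>2)"
    if x: "x \<in> carrier_vec n" for x
  proof -
    define y where "y = U\<^sup>T *\<^sub>v x"
    have y: "y \<in> carrier_vec n" unfolding y_def using U x by simp
    have xUy: "U *\<^sub>v y = x" unfolding y_def using U x UUT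
      by (simp add: assoc_mult_mat_vec[symmetric, of _ n n _ n])
    have sw: "x \<bullet> (U *\<^sub>v w) = y \<bullet> w" if "w \<in> carrier_vec n" for w
      unfolding y_def using transpose_vec_mult_scalar[OF U that x] by simp
    have "A *\<^sub>v x = U *\<^sub>v (D *\<^sub>v y)" unfolding y_def AUDU using U D x
      by (simp add: assoc_mult_mat_vec[of _ n n _ n])
    hence "x \<bullet> (A *\<^sub>v x) = y \<bullet> (D *\<^sub>v y)" using sw D y by simp
    also have "\<dots> = (\<Sum>k\<in>{0..<n}. y $ k * (D *\<^sub>v y) $ k)" using D by (simp add: scalar_prod_def)
    also have "\<dots> = (\<Sum>k<n. es ! k * (y $ k)\<^sup>2)"
      unfolding atLeast0LessThan D_def
      by (intro sum.cong refl) (simp add: diagm_mult_vec[OF y les] power2_eq_square)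
    finally have 1: "x \<bullet> (A *\<^sub>v x) = (\<Sum>k<n. es ! k * (y $ k)\<^sup>2)" .
    have "x \<bullet> x = y \<bullet> y" using sw[OF y] xUy by simp
    also have "\<dots> = (\<Sum>k<n. (y $ k)\<^sup>2)" using y by (simp add: scalar_prod_def atLeast0LessThan power2_eq_square)
    finally show ?thesis using 1 unfolding y_def by simp
  qed
  have es_le: "es ! i \<le> s" if i: "i < length es" for i
  proof -
    define x where "x = U *\<^sub>v unit_vec n i"
    have x: "x \<in> carrier_vec n" unfolding x_def using U by simp
    have yx: "U\<^sup>T *\<^sub>v x = unit_vec n i" unfolding x_def using U UTU
      by (simp add: assoc_mult_mat_vec[symmetric, of _ n n _ n])
    have s1: "(\<Sum>k<n. es ! k * ((unit_vec n i) $ k)\<^sup>2) = (\<Sum>k<n. if k = i then es ! i else 0)"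
      using i les by (intro sum.cong refl) auto
    also have "\<dots> = es ! i" using i les by simp
    finally have s1: "(\<Sum>k<n. es ! k * ((unit_vec n i) $ k)\<^sup>2) = es ! i" .
    have s2: "(\<Sum>k<n. ((unit_vec n i) $ k)\<^sup>2) = (\<Sum>k<n. if k = i then 1 else (0::real))"
      using i les by (intro sum.cong refl) auto
    also have "\<dots> = 1" using i les by simp
    finally have s2: "(\<Sum>k<n. ((unit_vec n i) $ k)\<^sup>2) = (1::real)" .
    show ?thesis using coords[OF x] QB[OF x] unfolding yx s1 s2 by simp
  qed
  define one where "one = vec n (\<lambda>_. 1::real)"
  have onec: "one \<in> carrier_vec n" unfolding one_def by simp
  define z where "z = U\<^sup>T *\<^sub>v one"
  have zc: "z \<in> carrier_vec n" unfolding z_def using U onec by simp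
  have Uz: "U *\<^sub>v z = one" unfolding z_def using U UUT onec
    by (simp add: assoc_mult_mat_vec[symmetric, of _ n n _ n])
  have Dz: "D *\<^sub>v z = s \<cdot>\<^sub>v z"
  proof -
    have "D *\<^sub>v z = U\<^sup>T *\<^sub>v (A *\<^sub>v (U *\<^sub>v z))" unfolding D_def UAU[symmetric] using U A zc
      by (simp add: assoc_mult_mat_vec[of _ n n _ n])
    also have "\<dots> = s \<cdot>\<^sub>v z" unfolding Uz using A1[folded one_def] z_def U onec
      by (simp add: mult_mat_vec)
    finally show ?thesis .
  qed
  have ez: "es ! i * z $ i = s * z $ i" if "i < length es" for i
    using arg_cong[OF Dz, of "\<lambda>v. v $ i"] that les zc
    by (simp add: D_def diagm_mult_vec)
  have z0: "\<exists>i < length es. z $ i \<noteq> 0"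
  proof (rule ccontr)
    assume "\<not> ?thesis"
    hence "z = 0\<^sub>v n" using zc les by (intro eq_vecI) auto
    moreover have "U *\<^sub>v 0\<^sub>v n = 0\<^sub>v n" using U by auto
    ultimately have "one = 0\<^sub>v n" using Uz by simp
    thus False using n unfolding one_def
      by (metis index_vec index_zero_vec(1) zero_neq_one less_le_trans pos2)
  qed
  have n2: "length es \<ge> 2" using les n by simp
  show "second_largest_eigenvalue A \<le> s" unfolding sle
    using second_facts(1)[OF n2] es_le by (metis in_set_conv_nth)
  fix x :: "real vec" assume x: "x \<in> carrier_vec n" and x1: "x \<bullet> vec n (\<lambda>_. 1) = 0"
  define y where "y = U\<^sup>T *\<^sub>v x"
  have yc: "y \<in> carrier_vec n" unfolding y_def using U x by simp
  have "y \<bullet> z = x \<bullet> one" using transpose_vec_mult_scalar[OF U zc x] Uz unfolding y_def by simp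
  hence yz: "(\<Sum>i<length es. y $ i * z $ i) = 0" using x1 yc zc les unfolding one_def
    by (simp add: scalar_prod_def atLeast0LessThan)
  have "(\<Sum>i<length es. es ! i * (y $ i)\<^sup>2) \<le> rev (sort es) ! 1 * (\<Sum>i<length es. (y $ i)\<^sup>2)"
    by (rule quad_ineq[OF n2 ez es_le yz z0])
  thus "x \<bullet> (A *\<^sub>v x) \<le> second_largest_eigenvalue A * (x \<bullet> x)"
    unfolding sle using coords[OF x] les unfolding y_def by simp
qed

lemma final_alg:
  fixes l s \<alpha> m f n :: real
  assumes m: "m > 0" and n: "n > 0" and a: "\<alpha> > 0" and s: "s > 0" and ls: "l < s" and f: "f \<ge> 0"
    and h1: "2 * m \<le> l * f + (s - l) * f\<^sup>2 / n" and h2: "m \<le> \<alpha> * (n * s / 2)"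
  shows "((sqrt (l\<^sup>2 + 4 * s * (s - l) * \<alpha>) - l) / (s * (s - l) * \<alpha>)) * m \<le> f"
proof (rule ccontr)
  define c where "c = s * (s - l) * \<alpha>"
  have c: "c > 0" unfolding c_def using s ls a by simp
  define D where "D = sqrt (l\<^sup>2 + 4 * c)"
  have pos0: "0 \<le> l\<^sup>2 + 4 * c" using c by (smt (verit) zero_le_power2)
  hence D2: "D\<^sup>2 = l\<^sup>2 + 4 * c" unfolding D_def by simp
  have D0: "D \<ge> 0" unfolding D_def using pos0 by simp
  have Dl: "D > \<bar>l\<bar>"
  proof -
    have "\<bar>l\<bar> = sqrt (l\<^sup>2)" by simp
    also have "\<dots> < D" unfolding D_def using c by (intro real_sqrt_less_mono) simp
    finally show ?thesis .
  qed
  assume neg: "\<not> ?thesis"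
  have e4: "l\<^sup>2 + 4 * s * (s - l) * \<alpha> = l\<^sup>2 + 4 * c" unfolding c_def by (simp add: algebra_simps)
  have "\<not> ((D - l) / c) * m \<le> f" using neg unfolding e4 c_def[symmetric] D_def[symmetric] .
  hence lt: "f < (D - l) / c * m" by simp
  have "c * f < (D - l) * m" using lt c by (simp add: field_simps)
  hence A1: "c * f + l * m < D * m" by (simp add: algebra_simps)
  have A2: "0 \<le> c * f + l * m + D * m"
  proof -
    have "0 \<le> c * f" using c f by simp
    moreover have "0 \<le> (l + D) * m" using Dl m by (intro mult_nonneg_nonneg) auto
    ultimately show ?thesis by (simp add: algebra_simps)
  qed
  have "(c * f + l * m)\<^sup>2 < (D * m)\<^sup>2"
  proof -
    have "(D * m)\<^sup>2 - (c * f + l * m)\<^sup>2 = (D * m - (c * f + l * m)) * (D * m + (c * f + l * m))"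
      by (simp add: power2_eq_square algebra_simps)
    moreover have "(D * m - (c * f + l * m)) > 0" using A1 by simp
    moreover have "(D * m + (c * f + l * m)) > 0"
    proof -
      have "D * m > \<bar>l\<bar> * m" using Dl m by simp
      moreover have "l * m \<ge> - \<bar>l\<bar> * m" using m mult_right_mono[OF abs_ge_minus_self[of l], of m] by simp
      moreover have "c * f \<ge> 0" using c f by simp
      ultimately show ?thesis by linarith
    qed
    ultimately show ?thesis by (metis diff_gt_0_iff_gt mult_pos_pos)
  qed
  moreover have "(D * m)\<^sup>2 = l\<^sup>2 * m\<^sup>2 + c * (4 * m\<^sup>2)" using D2 by (simp add: power_mult_distrib algebra_simps)
  moreover have "(c * f + l * m)\<^sup>2 = c * (c * f\<^sup>2 + 2 * l * f * m) + l\<^sup>2 * m\<^sup>2"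
    by (simp add: power2_eq_square algebra_simps)
  ultimately have "c * (c * f\<^sup>2 + 2 * l * f * m) < c * (4 * m\<^sup>2)" by linarith
  hence "c * (c * f\<^sup>2 + 2 * l * f * m - 4 * m\<^sup>2) < 0" by (simp add: algebra_simps)
  hence B: "c * f\<^sup>2 + 2 * l * f * m < 4 * m\<^sup>2" using c by (simp add: mult_less_0_iff)
  have "(s - l) * f\<^sup>2 / n \<le> c * f\<^sup>2 / (2 * m)"
  proof -
    have "(s - l) * f\<^sup>2 * (2 * m) \<le> (s - l) * f\<^sup>2 * (\<alpha> * n * s)"
      using h2 ls by (intro mult_left_mono) (auto simp: algebra_simps intro: mult_right_mono)
    thus ?thesis unfolding c_def using n m by (simp add: field_simps)
  qed
  hence "2 * m \<le> l * f + c * f\<^sup>2 / (2 * m)" using h1 by simp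
  hence "4 * m\<^sup>2 \<le> 2 * l * f * m + c * f\<^sup>2" using m by (simp add: field_simps power2_eq_square)
  thus False using B by simp
qed

lemma sum_indicator_card:
  fixes n :: nat
  shows "(\<Sum>i<n. \<Sum>j<n. if R i j then 1 else 0 :: real) = real (card {(i,j). i < n \<and> j < n \<and> R i j})"
proof -
  have "(\<Sum>i<n. \<Sum>j<n. if R i j then 1 else 0 :: real) = (\<Sum>p\<in>{..<n} \<times> {..<n}. if R (fst p) (snd p) then 1 else 0)"
    by (simp add: sum.cartesian_product case_prod_beta)
  also have "\<dots> = (\<Sum>p\<in>{p\<in>{..<n} \<times> {..<n}. R (fst p) (snd p)}. 1)"
    by (intro sum.inter_filter[symmetric] finite_cartesian_product finite_lessThan)
  also have "{p\<in>{..<n} \<times> {..<n}. R (fst p) (snd p)} = {(i,j). i < n \<and> j < n \<and> R i j}" by auto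
  finally show ?thesis by simp
qed

lemma pairs_card:
  assumes fin: "finite E" and E: "\<And>e. e \<in> E \<Longrightarrow> \<exists>u v. u \<noteq> v \<and> e = {u, v}"
  shows "card {(i,j). {i,j} \<in> E} = 2 * card E"
proof -
  have eq: "{(i,j). {i,j} \<in> E} = (\<Union>e\<in>E. {(i,j). {i,j} = e})" by auto
  have two: "card {(i,j). {i,j} = e} = 2" if e: "e \<in> E" for e
  proof -
    obtain u v where uv: "u \<noteq> v" "e = {u,v}" using E[OF e] by blast
    have "{(i,j). {i,j} = e} = {(u,v),(v,u)}" using uv by (auto simp: doubleton_eq_iff)
    thus ?thesis using uv by simp
  qed
  have fin2: "finite {(i,j). {i,j} = e}" if "e \<in> E" for e
    using two[OF that] by (intro card_ge_0_finite) simp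
  have "card (\<Union>e\<in>E. {(i,j). {i,j} = e}) = (\<Sum>e\<in>E. card {(i,j). {i,j} = e})"
    by (rule card_UN_disjoint) (use fin fin2 in auto)
  also have "\<dots> = (\<Sum>e\<in>E. 2)" using two by simp
  finally show ?thesis unfolding eq by simp
qed

lemma row_sum:
  assumes reg: "regular_graph n adj s" and i: "i < n"
  shows "(\<Sum>j<n. if adj i j then 1 else 0 :: real) = real s"
proof -
  have "(\<Sum>j<n. if adj i j then 1 else 0 :: real) = (\<Sum>j\<in>{j. j < n \<and> adj i j}. 1)"
    by (simp add: sum.If_cases Int_def conj_commute)
  also have "\<dots> = real (card {j. j < n \<and> adj i j})" by simp
  finally show ?thesis using reg i unfolding regular_graph_def by simp
qed

lemma col_sum:
  assumes sg: "simple_graph n adj" and reg: "regular_graph n adj s" and j: "j < n"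
  shows "(\<Sum>i<n. if adj i j then 1 else 0 :: real) = real s"
proof -
  have "(\<Sum>i<n. if adj i j then 1 else 0 :: real) = (\<Sum>i<n. if adj j i then 1 else 0 :: real)"
    using sg unfolding simple_graph_def by (intro sum.cong refl) metis
  thus ?thesis using row_sum[OF reg j] by simp
qed

lemma quad_bound:
  fixes x :: "nat \<Rightarrow> real"
  assumes sg: "simple_graph n adj" and reg: "regular_graph n adj s"
  shows "(\<Sum>i<n. \<Sum>j<n. (if adj i j then 1 else 0) * x i * x j) \<le> real s * (\<Sum>i<n. (x i)\<^sup>2)"
proof -
  let ?a = "\<lambda>i j. if adj i j then 1 else 0 :: real"
  have "(\<Sum>i<n. \<Sum>j<n. ?a i j * x i * x j) \<le> (\<Sum>i<n. \<Sum>j<n. ?a i j * ((x i)\<^sup>2 + (x j)\<^sup>2) / 2)"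
  proof (intro sum_mono)
    fix i j
    have "x i * x j \<le> ((x i)\<^sup>2 + (x j)\<^sup>2) / 2" using sum_squares_bound[of "x i" "x j"] by simp
    thus "?a i j * x i * x j \<le> ?a i j * ((x i)\<^sup>2 + (x j)\<^sup>2) / 2" by auto
  qed
  also have "\<dots> = ((\<Sum>i<n. \<Sum>j<n. ?a i j * (x i)\<^sup>2) + (\<Sum>i<n. \<Sum>j<n. ?a i j * (x j)\<^sup>2)) / 2"
    by (simp add: sum.distrib sum_divide_distrib[symmetric] algebra_simps)
  also have "(\<Sum>i<n. \<Sum>j<n. ?a i j * (x i)\<^sup>2) = (\<Sum>i<n. (x i)\<^sup>2 * (\<Sum>j<n. ?a i j))"
    by (simp add: sum_distrib_left mult.commute)
  also have "\<dots> = (\<Sum>i<n. (x i)\<^sup>2 * real s)" using row_sum[OF reg] by simp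
  also have "(\<Sum>i<n. \<Sum>j<n. ?a i j * (x j)\<^sup>2) = (\<Sum>j<n. \<Sum>i<n. ?a i j * (x j)\<^sup>2)" by (rule sum.swap)
  also have "\<dots> = (\<Sum>j<n. (x j)\<^sup>2 * (\<Sum>i<n. ?a i j))"
    by (simp add: sum_distrib_left mult.commute)
  also have "\<dots> = (\<Sum>j<n. (x j)\<^sup>2 * real s)" using col_sum[OF sg reg] by simp
  also have "((\<Sum>i<n. (x i)\<^sup>2 * real s) + (\<Sum>j<n. (x j)\<^sup>2 * real s)) / 2 = real s * (\<Sum>i<n. (x i)\<^sup>2)"
    by (simp add: sum_distrib_left[symmetric] mult.commute)
  finally show ?thesis .
qed

lemma adj_quad:
  assumes x: "x \<in> carrier_vec n"
  shows "x \<bullet> (adjacency_matrix n adj *\<^sub>v x) =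
    (\<Sum>i<n. \<Sum>j<n. (if adj i j then 1 else 0) * x $ i * x $ j)"
  using x by (simp add: adjacency_matrix_def scalar_prod_def atLeast0LessThan sum_distrib_left
      mult.commute mult.left_commute)

theorem mainTheorem6:
  fixes n s :: nat and adj :: "nat \<Rightarrow> nat \<Rightarrow> bool" and \<alpha> :: real and E :: "nat set set"
  assumes "0 < n"
    and "simple_graph n adj"
    and "connected_graph n adj"
    and "regular_graph n adj s"
    and "0 < \<alpha>" and "\<alpha> \<le> 1"
    and "E \<subseteq> graph_edges n adj"
    and "real (card E) \<le> \<alpha> * real (card (graph_edges n adj))"
  shows "let l2 = second_largest_eigenvalue (adjacency_matrix n adj);
             \<beta> = (sqrt (l2\<^sup>2 + 4 * real s * (real s - l2) * \<alpha>) - l2)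
                 / (real s * (real s - l2) * \<alpha>)
         in real (card (incident_vertices E)) \<ge> \<beta> * real (card E)"
proof -
  note n0 = assms(1) and sg = assms(2) and reg = assms(4) and a0 = assms(5)
    and EG = assms(7) and mle = assms(8)
  define A where "A = adjacency_matrix n adj"
  define l where "l = second_largest_eigenvalue A"
  define a where "a = (\<lambda>i j. if adj i j then 1 else 0 :: real)"
  define GE where "GE = graph_edges n adj"
  define F where "F = \<Union>E"
  have sgb: "\<And>u v. adj u v \<Longrightarrow> u < n \<and> v < n" and sgs: "\<And>u v. adj u v \<Longrightarrow> adj v u"
    and sgi: "\<And>u. \<not> adj u u" using sg unfolding simple_graph_def by blast+
  have GEsub: "GE \<subseteq> Pow {..<n}" unfolding GE_def graph_edges_def using sgb by auto
  have finGE: "finite GE" using finite_subset[OF GEsub] by simp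
  have finE: "finite E" using finite_subset[OF EG] finGE unfolding GE_def by simp
  have GEform: "\<exists>u v. u \<noteq> v \<and> e = {u, v}" if e: "e \<in> GE" for e
  proof -
    obtain p q where pq: "e = {p,q}" "adj p q" using e unfolding GE_def graph_edges_def by blast
    have "p \<noteq> q" using pq(2) sgi by metis
    thus ?thesis using pq(1) by blast
  qed
  have "E \<subseteq> Pow {..<n}" using subset_trans[OF EG GEsub[unfolded GE_def]] .
  hence Fsub: "F \<subseteq> {..<n}" unfolding F_def by blast
  have finF: "finite F" using finite_subset[OF Fsub] by simp
  have goal: "((sqrt (l\<^sup>2 + 4 * real s * (real s - l) * \<alpha>) - l) / (real s * (real s - l) * \<alpha>)) * real (card E) \<le> real (card F)"
  proof (cases "E = {}")
    case True thus ?thesis by simp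
  next
    case False
    then obtain e0 where e0: "e0 \<in> E" by blast
    hence "e0 \<in> graph_edges n adj" using EG by blast
    then obtain u v where uv: "u < n" "v < n" "adj u v" "e0 = {u,v}"
      unfolding graph_edges_def by blast
    have "u \<noteq> v" using uv sgi by blast
    hence n2: "n \<ge> 2" using uv by linarith
    have "v \<in> {w. w < n \<and> adj u w}" using uv by simp
    hence "card {w. w < n \<and> adj u w} > 0" by (metis card_gt_0_iff empty_iff finite_Collect_conjI finite_Collect_less_nat)
    hence spos: "s > 0" using reg uv unfolding regular_graph_def by simp
    have mpos: "card E > 0" using False finE by (simp add: card_gt_0_iff)
    have A: "A \<in> carrier_mat n n" unfolding A_def adjacency_matrix_def by simp
    have AT: "A\<^sup>T = A" unfolding A_def adjacency_matrix_def using sgs by (intro eq_matI) auto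
    have A1: "A *\<^sub>v vec n (\<lambda>_. 1) = real s \<cdot>\<^sub>v vec n (\<lambda>_. 1)"
    proof (rule eq_vecI)
      fix i assume "i < dim_vec (real s \<cdot>\<^sub>v vec n (\<lambda>_. 1::real))"
      hence i: "i < n" by simp
      have "(A *\<^sub>v vec n (\<lambda>_. 1)) $ i = (\<Sum>j<n. if adj i j then 1 else 0 :: real)"
        using i unfolding A_def adjacency_matrix_def by (simp add: scalar_prod_def atLeast0LessThan)
      thus "(A *\<^sub>v vec n (\<lambda>_. 1)) $ i = (real s \<cdot>\<^sub>v vec n (\<lambda>_. 1)) $ i"
        using row_sum[OF reg i] i by simp
    qed (insert A, auto)
    have QB: "x \<bullet> (A *\<^sub>v x) \<le> real s * (x \<bullet> x)" if x: "x \<in> carrier_vec n" for x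
    proof -
      have "x \<bullet> x = (\<Sum>i<n. (x $ i)\<^sup>2)" using x by (simp add: scalar_prod_def atLeast0LessThan power2_eq_square)
      thus ?thesis unfolding A_def adj_quad[OF x] using quad_bound[OF sg reg, of "\<lambda>i. x $ i"] by simp
    qed
    have ls: "l \<le> real s" unfolding l_def
      by (rule spectral_bound(1)[OF A AT n2 A1]) (rule QB)
    define f where "f = real (card F)"
    define ind where "ind = (\<lambda>i. if i \<in> F then 1 else 0 :: real)"
    define c where "c = f / real n"
    define xv where "xv = vec n (\<lambda>i. ind i - c)"
    have xvc: "xv \<in> carrier_vec n" unfolding xv_def by simp
    have S1: "(\<Sum>i<n. ind i) = f"
    proof -
      have "(\<Sum>i<n. ind i) = real (card ({..<n} \<inter> F))" unfolding ind_def
        by (simp add: sum.If_cases)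
      also have "{..<n} \<inter> F = F" using Fsub by blast
      finally show ?thesis unfolding f_def .
    qed
    have "\<And>i. (ind i)\<^sup>2 = ind i" unfolding ind_def by simp
    hence S2: "(\<Sum>i<n. (ind i)\<^sup>2) = f" using S1 by simp
    have cn: "c * real n = f" unfolding c_def using n0 by simp
    have xv1: "xv \<bullet> vec n (\<lambda>_. 1) = 0"
    proof -
      have "xv \<bullet> vec n (\<lambda>_. 1) = (\<Sum>i<n. ind i - c)" unfolding xv_def by (simp add: scalar_prod_def atLeast0LessThan)
      also have "\<dots> = f - c * real n" using S1 by (simp add: sum_subtractf)
      finally show ?thesis using cn by simp
    qed
    have bnd: "xv \<bullet> (A *\<^sub>v xv) \<le> l * (xv \<bullet> xv)" unfolding l_def
      by (rule spectral_bound(2)[OF A AT n2 A1]) (auto intro: QB xvc xv1)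
    have xvxv: "xv \<bullet> xv = (\<Sum>i<n. (ind i - c)\<^sup>2)" unfolding xv_def
      by (simp add: scalar_prod_def atLeast0LessThan power2_eq_square)
    have xvA: "xv \<bullet> (A *\<^sub>v xv) = (\<Sum>i<n. \<Sum>j<n. a i j * (ind i - c) * (ind j - c))"
      unfolding A_def adj_quad[OF xvc] a_def by (simp add: xv_def)
    have Rsum: "(\<Sum>i<n. \<Sum>j<n. a i j * ind i) = real s * f"
    proof -
      have "(\<Sum>i<n. \<Sum>j<n. a i j * ind i) = (\<Sum>i<n. ind i * (\<Sum>j<n. a i j))"
        by (simp add: sum_distrib_left mult.commute)
      also have "\<dots> = (\<Sum>i<n. ind i * real s)" using row_sum[OF reg] unfolding a_def by simp
      also have "\<dots> = real s * (\<Sum>i<n. ind i)" by (simp add: sum_distrib_left mult.commute)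
      finally show ?thesis using S1 by simp
    qed
    have Csum: "(\<Sum>i<n. \<Sum>j<n. a i j * ind j) = real s * f"
    proof -
      have "(\<Sum>i<n. \<Sum>j<n. a i j * ind j) = (\<Sum>j<n. \<Sum>i<n. a i j * ind j)" by (rule sum.swap)
      also have "\<dots> = (\<Sum>j<n. ind j * (\<Sum>i<n. a i j))"
        by (simp add: sum_distrib_left mult.commute)
      also have "\<dots> = (\<Sum>j<n. ind j * real s)" using col_sum[OF sg reg] unfolding a_def by simp
      also have "\<dots> = real s * (\<Sum>j<n. ind j)" by (simp add: sum_distrib_left mult.commute)
      finally show ?thesis using S1 by simp
    qed
    have Tot: "(\<Sum>i<n. \<Sum>j<n. a i j) = real n * real s"
      using row_sum[OF reg] unfolding a_def by simp
    have expand: "(\<Sum>i<n. \<Sum>j<n. a i j * (ind i - c) * (ind j - c)) =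
        (\<Sum>i<n. \<Sum>j<n. a i j * ind i * ind j) - c * (\<Sum>i<n. \<Sum>j<n. a i j * ind i)
        - c * (\<Sum>i<n. \<Sum>j<n. a i j * ind j) + c\<^sup>2 * (\<Sum>i<n. \<Sum>j<n. a i j)"
    proof -
      have e: "\<And>i j. a i j * (ind i - c) * (ind j - c) =
          a i j * ind i * ind j - c * (a i j * ind i) - c * (a i j * ind j) + c\<^sup>2 * a i j"
        by (simp add: algebra_simps power2_eq_square)
      show ?thesis unfolding e
        by (simp only: sum.distrib sum_subtractf sum_distrib_left)
    qed
    have expand2: "(\<Sum>i<n. (ind i - c)\<^sup>2) = f - 2 * c * f + c\<^sup>2 * real n"
    proof -
      have e: "\<And>i. (ind i - c)\<^sup>2 = (ind i)\<^sup>2 - 2 * c * ind i + c\<^sup>2"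
        by (simp add: algebra_simps power2_eq_square)
      show ?thesis unfolding e using S1 S2
        by (simp add: sum.distrib sum_subtractf sum_distrib_left[symmetric])
    qed
    define m where "m = real (card E)"
    have Qu: "(\<Sum>i<n. \<Sum>j<n. a i j * ind i * ind j) \<ge> 2 * m"
    proof -
      have "(\<Sum>i<n. \<Sum>j<n. a i j * ind i * ind j) = (\<Sum>i<n. \<Sum>j<n. if adj i j \<and> i \<in> F \<and> j \<in> F then 1 else 0)"
        unfolding a_def ind_def by (intro sum.cong refl) auto
      also have "\<dots> = real (card {(i,j). i < n \<and> j < n \<and> (adj i j \<and> i \<in> F \<and> j \<in> F)})"
        by (rule sum_indicator_card)
      also have "card {(i,j). {i,j} \<in> E} \<le> card {(i,j). i < n \<and> j < n \<and> (adj i j \<and> i \<in> F \<and> j \<in> F)}"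
      proof (rule card_mono)
        show "finite {(i,j). i < n \<and> j < n \<and> (adj i j \<and> i \<in> F \<and> j \<in> F)}"
          by (rule finite_subset[of _ "{..<n} \<times> {..<n}"]) auto
        show "{(i,j). {i,j} \<in> E} \<subseteq> {(i,j). i < n \<and> j < n \<and> (adj i j \<and> i \<in> F \<and> j \<in> F)}"
        proof (safe)
          fix i j assume ij: "{i,j} \<in> E"
          then obtain p q where pq: "p < n" "q < n" "adj p q" "{i,j} = {p,q}"
            using EG unfolding graph_edges_def by blast
          have "adj i j" using pq sgs by (auto simp: doubleton_eq_iff)
          moreover have "i \<in> F" "j \<in> F" unfolding F_def using ij by auto
          ultimately show "i < n" "j < n" "adj i j" "i \<in> F" "j \<in> F" using sgb by auto
        qed
      qed
      moreover have "card {(i,j). {i,j} \<in> E} = 2 * card E"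
        using pairs_card[OF finE] GEform EG unfolding GE_def by blast
      ultimately show ?thesis unfolding m_def by linarith
    qed
    have GEcard: "2 * real (card GE) = real n * real s"
    proof -
      have "{(i,j). {i,j} \<in> GE} = {(i,j). i < n \<and> j < n \<and> adj i j}"
      proof (safe)
        fix i j assume "{i,j} \<in> GE"
        then obtain p q where pq: "p < n" "q < n" "adj p q" "{i,j} = {p,q}"
          unfolding GE_def graph_edges_def by blast
        thus "i < n" "j < n" "adj i j" using sgs by (auto simp: doubleton_eq_iff)
      next
        fix i j assume "i < n" "j < n" "adj i j"
        thus "{i,j} \<in> GE" unfolding GE_def graph_edges_def by blast
      qed
      hence "2 * card GE = card {(i,j). i < n \<and> j < n \<and> adj i j}"
        using pairs_card[OF finGE GEform] by simp
      hence "2 * real (card GE) = (\<Sum>i<n. \<Sum>j<n. a i j)"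
        unfolding a_def using sum_indicator_card[of adj n] by (metis of_nat_mult of_nat_numeral)
      thus ?thesis using Tot by simp
    qed
    have h2: "m \<le> \<alpha> * (real n * real s / 2)"
    proof -
      have "real n * real s / 2 = real (card GE)" using GEcard by simp
      thus ?thesis using mle unfolding m_def GE_def by simp
    qed
    define K where "K = f\<^sup>2 / real n"
    have K1: "c * (real s * f) = real s * K" unfolding c_def K_def by (simp add: power2_eq_square)
    have K2: "c\<^sup>2 * (real n * real s) = real s * K" unfolding c_def K_def using n0
      by (simp add: power2_eq_square field_simps)
    have K3: "c * f = K" unfolding c_def K_def by (simp add: power2_eq_square)
    have K4: "c\<^sup>2 * real n = K" unfolding c_def K_def using n0 by (simp add: power2_eq_square field_simps)
    have E1: "f - 2 * c * f + c\<^sup>2 * real n = f - K"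
    proof -
      have "2 * c * f = 2 * (c * f)" by simp
      thus ?thesis using K3 K4 by linarith
    qed
    have E2: "(real s - l) * f\<^sup>2 / real n = real s * K - l * K" unfolding K_def using n0
      by (simp add: field_simps)
    have B0: "(\<Sum>i<n. \<Sum>j<n. a i j * ind i * ind j) - c * (real s * f) - c * (real s * f) + c\<^sup>2 * (real n * real s)
        \<le> l * (f - 2 * c * f + c\<^sup>2 * real n)"
      using bnd unfolding xvA xvxv expand expand2 Rsum Csum Tot .
    hence "(\<Sum>i<n. \<Sum>j<n. a i j * ind i * ind j) - real s * K - real s * K + real s * K \<le> l * (f - K)"
      unfolding K1 K2 E1 .
    hence B1: "(\<Sum>i<n. \<Sum>j<n. a i j * ind i * ind j) \<le> l * f - l * K + real s * K"
      by (simp add: algebra_simps)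
    have h1: "2 * m \<le> l * f + (real s - l) * f\<^sup>2 / real n" unfolding E2 using B1 Qu by linarith
    show ?thesis
    proof (cases "l = real s")
      case True thus ?thesis by simp
    next
      case False
      hence "l < real s" using ls by simp
      have "((sqrt (l\<^sup>2 + 4 * real s * (real s - l) * \<alpha>) - l) / (real s * (real s - l) * \<alpha>)) * m \<le> f"
        by (rule final_alg[OF _ _ a0 _ \<open>l < real s\<close> _ h1 h2])
           (use mpos n0 spos in \<open>auto simp: m_def f_def\<close>)
      thus ?thesis unfolding m_def f_def .
    qed
  qed
  thus ?thesis unfolding Let_def incident_vertices_def F_def[symmetric] l_def A_def by simp
qed

end
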